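(* In the mini-batch setting below, fix $t\ge1$. Let $\check q_{J_t}$ be the $L_2$-orthogonal projection of $q_\tau$ onto $\mathcal{G}_t$, let $h_t=\widehat q_{t-1}-\check q_{J_t}$, and let $s_{t,1}=\tau-\mathbb{I}(Y_{t,1}\le\widehat q_{t-1}(\mathbf{X}_{t,1}))$. Define $$II := 2\gamma_t\,\mathbb{E}\Big[\big\langle \widehat q_{t-1}-q_\tau,\; s_{t,1}K_t(\mathbf{X}_{t,1},\cdot)\big\rangle_{L_2}\Big].$$ Then $$II\le -\gamma_t\,c_1C_1\,\mathbb{E}\|h_t\|_{L_2}^2+\gamma_t\frac{c_2^2C_2^2}{c_1C_1}\|q_\tau-\check q_{J_t}\|_{L_2}^2.$$
   Context: Setting: batches $\{(\mathbf{X}_{t,i},Y_{t,i})\}_{i=1}^{n_t}$, $t=1,2,\dots$, with all observations i.i.d. copies of $(\mathbf{X},Y)\in[0,1]^p\times\mathbb{R}$; $\tau\in(0,1)$; $q_\tau$ is the conditional $\tau$-quantile of $Y$ given $\mathbf{X}$. For each $k$, $\{\psi_{kj}\}_{j\ge1}$ is a centered ($\int_0^1\psi_{kj}=0$) orthonormal system in $L_2[0,1]$ with $\sup_{k,j}\|\psi_{kj}\|_\infty\le M$, $M\ge1$. $q_\tau(\mathbf{x})=\alpha^*+\sum_{k=1}^p\sum_{j\ge1}\theta^*_{kj}\psi_{kj}(x^{(k)})$ with $|\alpha^*|+\sum_{k,j}|\theta^*_{kj}|\le R$; $B:=MR$. (A1): $\mathbf{X}$ has density $p_X$ with $C_1\le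 p_X\le C_2$ on $[0,1]^p$, $C_1>0$. (A2): the conditional density satisfies $c_1\le p_{Y|\mathbf{X}}(y|\mathbf{x})\le c_2$ for all $\mathbf{x}\in[0,1]^p$, $y\in[-B,B]$, $c_1>0$. $\boldsymbol\Psi_t(\mathbf{x})=(1,\psi_{11}(x^{(1)}),\dots,\psi_{pJ_t}(x^{(p)}))^\top\in\mathbb{R}^{1+pJ_t}$; $\mathcal{G}_t$ is the linear span of its components in $L_2([0,1]^p)$ (Lebesgue measure); $K_t(\mathbf{u},\mathbf{v})=\boldsymbol\Psi_t(\mathbf{u})^\top\boldsymbol\Psi_t(\mathbf{v})$. The quantity $\boldsymbol\theta_{t-1}$ is any random vector, measurable with respect to the data up to time $t-1$, with $\|\boldsymbol\theta_{t-1}\|_1\le R$ (padded with zeros to length $1+pJ_t$), e.g. the iterate of the mini-batch P-FGD algorithm with $\ell_1$-ball projection of radius $R$; $\widehat q_{t-1}(\mathbf{x})=\boldsymbol\theta_{t-1}^\top\boldsymbol\Psi_t(\mathbf{x})$. $\gamma_t>0$ is deterministic. *)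

theory Defs
  imports "HOL-Probability.Probability"
begin

definition unit_cube :: "(real^'p) set" where
  "unit_cube = {x. \<forall>k. 0 \<le> x$k \<and> x$k \<le> 1}"

definition L2_inner :: "(real^'p \<Rightarrow> real) \<Rightarrow> (real^'p \<Rightarrow> real) \<Rightarrow> real" where
  "L2_inner f g = (LINT x:unit_cube|lborel. f x * g x)"

text \<open>The function a + sum_k sum_{j<J} c k j psi_kj(x^(k)), i.e. the vector (a,c) dotted
  with Psi_t(x) (the basis index j is 0-based: j < J stands for j = 1..J).\<close>
definition trunc_fun :: "('p \<Rightarrow> nat \<Rightarrow> real \<Rightarrow> real) \<Rightarrow> nat \<Rightarrow> real \<Rightarrow> ('p \<Rightarrow> nat \<Rightarrow> real)
    \<Rightarrow> real^'p \<Rightarrow> real" where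
  "trunc_fun psi J a c x = a + (\<Sum>k\<in>UNIV. \<Sum>j<J. c k j * psi k j (x$k))"

definition basis_span :: "('p \<Rightarrow> nat \<Rightarrow> real \<Rightarrow> real) \<Rightarrow> nat \<Rightarrow> (real^'p \<Rightarrow> real) set" where
  "basis_span psi J = {g. \<exists>a c. g = trunc_fun psi J a c}"

text \<open>K_t(u,v) = Psi_t(u)^T Psi_t(v).\<close>
definition kernel_t :: "('p \<Rightarrow> nat \<Rightarrow> real \<Rightarrow> real) \<Rightarrow> nat \<Rightarrow> real^'p \<Rightarrow> real^'p \<Rightarrow> real" where
  "kernel_t psi J u v = 1 + (\<Sum>k\<in>UNIV. \<Sum>j<J. psi k j (u$k) * psi k j (v$k))"

definition is_L2_proj :: "('p \<Rightarrow> nat \<Rightarrow> real \<Rightarrow> real) \<Rightarrow> nat \<Rightarrow> (real^'p \<Rightarrow> real)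
    \<Rightarrow> (real^'p \<Rightarrow> real) \<Rightarrow> bool" where
  "is_L2_proj psi J q qc \<longleftrightarrow> qc \<in> basis_span psi J \<and>
     (\<forall>g\<in>basis_span psi J. L2_inner (\<lambda>x. q x - qc x) g = 0)"

end

theory Submission
  imports Defs
begin

lemma Basis_vec_range: "(Basis :: (real^'p::finite) set) = range (\<lambda>i. axis i 1)"
  by (auto simp: Basis_vec_def)

lemma inj_axis1: "inj (\<lambda>i::'p::finite. axis i (1::real))"
  by (auto simp: inj_def axis_eq_axis)

lemma sum_Basis_nth:
  fixes f :: "(real^'p) \<Rightarrow> real"
  shows "(\<Sum>b\<in>Basis. f b *\<^sub>R b) $ (i::'p::finite) = f (axis i 1)"
proof -
  have "(\<Sum>b\<in>Basis. f b *\<^sub>R b) $ i = (\<Sum>b\<in>Basis. f b * b $ i)"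
    by (simp add: sum_component)
  also have "\<dots> = (\<Sum>j\<in>UNIV. f (axis j 1) * axis j 1 $ i)"
    unfolding Basis_vec_range by (subst sum.reindex[OF inj_axis1]) simp
  also have "\<dots> = (\<Sum>j\<in>UNIV. if j = i then f (axis i 1) else 0)"
    by (intro sum.cong) (auto simp: axis_def)
  also have "\<dots> = f (axis i 1)" by simp
  finally show ?thesis .
qed

lemma lborel_vec_prod:
  fixes G :: "'p::finite \<Rightarrow> real \<Rightarrow> real"
  assumes int: "\<And>i. integrable lborel (G i)"
  shows "(\<integral>v. (\<Prod>i\<in>UNIV. G i (v$i)) \<partial>(lborel::(real^'p) measure)) = (\<Prod>i\<in>UNIV. \<integral>u. G i u \<partial>lborel)"
proof -
  define T where "T = (\<lambda>f. \<Sum>b\<in>(Basis::(real^'p) set). f b *\<^sub>R b)"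
  define H where "H = (\<lambda>b::real^'p. G (THE i. axis i 1 = b))"
  have Hax: "H (axis i 1) = G i" for i
    unfolding H_def by (rule arg_cong[where f=G]) (auto simp: axis_eq_axis)
  have Gm[measurable]: "G i \<in> borel_measurable borel" for i
    using int[of i] by auto
  have eq: "(lborel::(real^'p) measure) = distr (\<Pi>\<^sub>M b\<in>Basis. lborel) borel T"
    unfolding T_def by (rule lborel_eq)
  have Tm: "T \<in> measurable (\<Pi>\<^sub>M b\<in>Basis. lborel) borel"
    unfolding T_def by measurable
  have Fm: "(\<lambda>v::real^'p. \<Prod>i\<in>UNIV. G i (v$i)) \<in> borel_measurable borel"
    by measurable
  have "(\<integral>v. (\<Prod>i\<in>UNIV. G i (v$i)) \<partial>(lborel::(real^'p) measure))
      = (\<integral>f. (\<Prod>i\<in>UNIV. G i (T f $ i)) \<partial>(\<Pi>\<^sub>M b\<in>Basis. lborel))"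
    unfolding eq using Tm Fm by (subst integral_distr) auto
  also have "\<dots> = (\<integral>f. (\<Prod>b\<in>Basis. H b (f b)) \<partial>(\<Pi>\<^sub>M b\<in>Basis. lborel))"
    unfolding Basis_vec_range T_def sum_Basis_nth[unfolded Basis_vec_range]
    by (subst prod.reindex[OF inj_axis1]) (simp add: Hax)
  also have "\<dots> = (\<Prod>b\<in>Basis. \<integral>u. H b u \<partial>lborel)"
  proof (rule product_sigma_finite.product_integral_prod)
    show "product_sigma_finite (\<lambda>_. lborel)"
      by (simp add: product_sigma_finite.intro sigma_finite_lborel)
  next
    fix b :: "real^'p" assume "b \<in> Basis"
    then obtain i where "b = axis i 1" unfolding Basis_vec_range by auto
    then show "integrable lborel (H b)" using int Hax by simp
  qed simp
  also have "\<dots> = (\<Prod>i\<in>UNIV. \<integral>u. G i u \<partial>lborel)"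
    unfolding Basis_vec_range by (subst prod.reindex[OF inj_axis1]) (simp add: Hax)
  finally show ?thesis .
qed


lemma cube_eq_cbox: "(unit_cube :: (real^'p::finite) set) = cbox 0 1"
  by (auto simp: unit_cube_def mem_box_cart)

lemma cube_sets[measurable]: "(unit_cube :: (real^'p::finite) set) \<in> sets lborel"
  by (simp add: cube_eq_cbox)

lemma cube_finite: "emeasure lborel (unit_cube :: (real^'p::finite) set) < \<infinity>"
  by (simp only: cube_eq_cbox emeasure_lborel_cbox_finite)

lemma ind_cube: "indicator (unit_cube :: (real^'p::finite) set) v = (\<Prod>i\<in>UNIV. indicator {0..1::real} (v$i) :: real)"
proof (cases "v \<in> unit_cube")
  case True then show ?thesis by (auto simp: unit_cube_def indicator_def)
next
  case False
  then obtain i where "\<not> (0 \<le> v$i \<and> v$i \<le> 1)" by (auto simp: unit_cube_def)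
  then have "indicator {0..1::real} (v$i) = (0::real)" by auto
  then have "(\<Prod>i\<in>UNIV. indicator {0..1::real} (v$i) :: real) = 0"
    by (intro prod_zero) auto
  with False show ?thesis by simp
qed

lemma set_integrable_bdd:
  fixes f :: "'a::euclidean_space \<Rightarrow> real"
  assumes "A \<in> sets lborel" "emeasure lborel A < \<infinity>" "f \<in> borel_measurable borel"
    "\<And>x. x \<in> A \<Longrightarrow> \<bar>f x\<bar> \<le> C"
  shows "set_integrable lborel A f"
  unfolding set_integrable_def
  by (rule integrableI_bounded_set_indicator[where B=C]) (use assms in auto)

lemma cube_int:
  fixes G :: "'p::finite \<Rightarrow> real \<Rightarrow> real"
  assumes meas: "\<And>i. G i \<in> borel_measurable borel"
    and bnd: "\<And>i. \<exists>C. \<forall>u\<in>{0..1}. \<bar>G i u\<bar> \<le> C"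
  shows "(LINT v:(unit_cube::(real^'p) set)|lborel. \<Prod>i\<in>UNIV. G i (v$i))
       = (\<Prod>i\<in>UNIV. LINT u:{0..1}|lborel. G i u)"
proof -
  have int: "integrable lborel (\<lambda>u. indicator {0..1} u * G i u)" for i
  proof -
    obtain C where "\<forall>u\<in>{0..1}. \<bar>G i u\<bar> \<le> C" using bnd by blast
    then have "set_integrable lborel {0..1} (G i)"
      by (intro set_integrable_bdd[where C=C] meas) auto
    then show ?thesis by (simp add: set_integrable_def)
  qed
  have "(LINT v:(unit_cube::(real^'p) set)|lborel. \<Prod>i\<in>UNIV. G i (v$i))
      = (\<integral>v. (\<Prod>i\<in>UNIV. indicator {0..1} (v$i) * G i (v$i)) \<partial>(lborel::(real^'p) measure))"
    unfolding set_lebesgue_integral_def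
    by (rule arg_cong[where f="integral\<^sup>L lborel"]) (simp add: fun_eq_iff ind_cube prod.distrib)
  also have "\<dots> = (\<Prod>i\<in>UNIV. \<integral>u. indicator {0..1} u * G i u \<partial>lborel)"
    by (rule lborel_vec_prod[where G="\<lambda>i u. indicator {0..1} u * G i u", OF int])
  also have "\<dots> = (\<Prod>i\<in>UNIV. LINT u:{0..1}|lborel. G i u)"
    by (simp add: set_lebesgue_integral_def)
  finally show ?thesis .
qed

lemma prod_if_one: "(\<Prod>i\<in>(UNIV::'p::finite set). if i = k then x else 1) = (x::real)"
  by (simp add: prod.delta)


lemma set_int_01_one: "(LINT u:{0..1::real}|lborel. (1::real)) = 1"
  by (simp add: set_integral_const)  

locale psi_sys =
  fixes psi :: "'p::finite \<Rightarrow> nat \<Rightarrow> real \<Rightarrow> real" and Mpsi :: real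
  assumes Mpsi: "Mpsi \<ge> 1"
    and psi_meas: "\<forall>k j. psi k j \<in> borel_measurable borel"
    and psi_bnd: "\<forall>k j u. u \<in> {0..1} \<longrightarrow> \<bar>psi k j u\<bar> \<le> Mpsi"
    and psi_centered: "\<forall>k j. (LINT u:{0..1}|lborel. psi k j u) = 0"
    and psi_orthonormal: "\<forall>k j j'. (LINT u:{0..1}|lborel. psi k j u * psi k j' u)
                                      = (if j = j' then 1 else 0)"
begin

lemma psi_m[measurable]: "psi k j \<in> borel_measurable borel"
  using psi_meas by blast

lemma cube_one: "(LINT v:(unit_cube::(real^'p) set)|lborel. (1::real)) = 1"
proof -
  have "(LINT v:(unit_cube::(real^'p) set)|lborel. \<Prod>i\<in>(UNIV::'p set). (1::real))
       = (\<Prod>i\<in>(UNIV::'p set). LINT u:{0..1::real}|lborel. (1::real))"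
    by (rule cube_int[where G="\<lambda>_ _. 1", OF _ exI[where x=1]]) auto
  then show ?thesis by (simp add: set_int_01_one)
qed

lemma cube_single: "(LINT v:(unit_cube::(real^'p) set)|lborel. psi k j (v$k)) = 0"
proof -
  define G where "G = (\<lambda>i u. if i = k then psi k j u else 1)"
  have "(LINT v:(unit_cube::(real^'p) set)|lborel. \<Prod>i\<in>UNIV. G i (v$i))
       = (\<Prod>i\<in>UNIV. LINT u:{0..1}|lborel. G i u)"
  proof (rule cube_int)
    fix i show "G i \<in> borel_measurable borel" unfolding G_def by auto
    show "\<exists>C. \<forall>u\<in>{0..1}. \<bar>G i u\<bar> \<le> C"
      using psi_bnd Mpsi unfolding G_def by (intro exI[of _ Mpsi]) auto
  qed
  moreover have "(\<Prod>i\<in>UNIV. G i (v$i)) = psi k j (v$k)" for v :: "real^'p"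
    unfolding G_def by (simp add: prod.delta)
  moreover have "(\<Prod>i\<in>UNIV. LINT u:{0..1}|lborel. G i u) = 0"
  proof -
    have "(LINT u:{0..1}|lborel. G k u) = 0" by (simp add: G_def psi_centered)
    then show ?thesis by (auto intro!: prod_zero)
  qed
  ultimately show ?thesis by simp
qed

lemma cube_pair: "(LINT v:(unit_cube::(real^'p) set)|lborel. psi k j (v$k) * psi k' j' (v$k'))
   = (if k = k' \<and> j = j' then 1 else 0)"
proof -
  define G where "G = (\<lambda>i u. (if i = k then psi k j u else 1) * (if i = k' then psi k' j' u else 1))"
  have "(LINT v:(unit_cube::(real^'p) set)|lborel. \<Prod>i\<in>UNIV. G i (v$i))
       = (\<Prod>i\<in>UNIV. LINT u:{0..1}|lborel. G i u)"
  proof (rule cube_int)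
    fix i show "G i \<in> borel_measurable borel" unfolding G_def by auto
    show "\<exists>C. \<forall>u\<in>{0..1}. \<bar>G i u\<bar> \<le> C"
    proof (intro exI[of _ "Mpsi * Mpsi"] ballI)
      fix u :: real assume u: "u \<in> {0..1}"
      have a: "\<bar>if i = k then psi k j u else 1\<bar> \<le> Mpsi" using psi_bnd Mpsi u by auto
      have b: "\<bar>if i = k' then psi k' j' u else 1\<bar> \<le> Mpsi" using psi_bnd Mpsi u by auto
      show "\<bar>G i u\<bar> \<le> Mpsi * Mpsi" unfolding G_def abs_mult
        by (rule mult_mono[OF a b]) (use Mpsi in auto)
    qed
  qed
  moreover have "(\<Prod>i\<in>UNIV. G i (v$i)) = psi k j (v$k) * psi k' j' (v$k')" for v :: "real^'p"
    unfolding G_def prod.distrib by (simp add: prod.delta)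
  moreover have "(\<Prod>i\<in>UNIV. LINT u:{0..1}|lborel. G i u) = (if k = k' \<and> j = j' then 1 else 0)"
  proof (cases "k = k'")
    case True
    have "(\<Prod>i\<in>UNIV. LINT u:{0..1}|lborel. G i u)
        = (\<Prod>i\<in>UNIV. if i = k then (LINT u:{0..1}|lborel. psi k j u * psi k j' u) else 1)"
      by (intro prod.cong) (auto simp: G_def True set_int_01_one)
    also have "\<dots> = (if j = j' then 1 else 0)"
      by (simp add: prod.delta psi_orthonormal)
    finally show ?thesis using True by simp
  next
    case False
    have "(LINT u:{0..1}|lborel. G k u) = 0"
      using False by (simp add: G_def psi_centered)
    then have "(\<Prod>i\<in>UNIV. LINT u:{0..1}|lborel. G i u) = 0"
      by (auto intro!: prod_zero)
    then show ?thesis using False by simp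
  qed
  ultimately show ?thesis by simp
qed

end

lemma set_int_sum:
  fixes f :: "'i \<Rightarrow> 'a \<Rightarrow> real"
  assumes "finite I" "\<And>i. i \<in> I \<Longrightarrow> set_integrable M A (f i)"
  shows "(LINT x:A|M. (\<Sum>i\<in>I. f i x)) = (\<Sum>i\<in>I. LINT x:A|M. f i x)"
  using assms unfolding set_integrable_def set_lebesgue_integral_def real_scaleR_def sum_distrib_left
  by (intro Bochner_Integration.integral_sum) auto

lemma set_integrable_sum':
  fixes f :: "'i \<Rightarrow> 'a \<Rightarrow> real"
  assumes "finite I" "\<And>i. i \<in> I \<Longrightarrow> set_integrable M A (f i)"
  shows "set_integrable M A (\<lambda>x. \<Sum>i\<in>I. f i x)"
  using assms unfolding set_integrable_def real_scaleR_def sum_distrib_left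
  by (intro Bochner_Integration.integrable_sum) auto

lemma set_integrable_cube:
  fixes f :: "real^'p::finite \<Rightarrow> real"
  assumes "f \<in> borel_measurable borel" "\<And>x. x \<in> unit_cube \<Longrightarrow> \<bar>f x\<bar> \<le> C"
  shows "set_integrable lborel unit_cube f"
  by (rule set_integrable_bdd[OF cube_sets cube_finite assms])

definition bidx :: "nat \<Rightarrow> ('p \<times> nat) option set" where
  "bidx J = insert None (Some ` (UNIV \<times> {..<J}))"

definition bphi :: "('p \<Rightarrow> nat \<Rightarrow> real \<Rightarrow> real) \<Rightarrow> ('p \<times> nat) option \<Rightarrow> real^'p \<Rightarrow> real" where
  "bphi psi \<iota> v = (case \<iota> of None \<Rightarrow> 1 | Some (k, j) \<Rightarrow> psi k j (v$k))"

definition bcoef :: "real \<Rightarrow> ('p \<Rightarrow> nat \<Rightarrow> real) \<Rightarrow> ('p \<times> nat) option \<Rightarrow> real" where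
  "bcoef a c \<iota> = (case \<iota> of None \<Rightarrow> a | Some (k, j) \<Rightarrow> c k j)"

lemma finite_bidx[simp]: "finite (bidx J :: ('p::finite \<times> nat) option set)"
  by (simp add: bidx_def)

lemma sum_bidx:
  fixes g :: "('p::finite \<times> nat) option \<Rightarrow> real"
  shows "(\<Sum>\<iota>\<in>bidx J. g \<iota>) = g None + (\<Sum>k\<in>UNIV. \<Sum>j<J. g (Some (k, j)))"
proof -
  have "(\<Sum>\<iota>\<in>bidx J. g \<iota>) = g None + (\<Sum>\<iota>\<in>Some ` (UNIV \<times> {..<J}). g \<iota>)"
    unfolding bidx_def by (subst sum.insert) auto
  also have "(\<Sum>\<iota>\<in>Some ` (UNIV \<times> {..<J}). g \<iota>) = (\<Sum>x\<in>UNIV \<times> {..<J}. g (Some x))"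
    by (subst sum.reindex) (auto simp: inj_on_def)
  also have "\<dots> = (\<Sum>k\<in>UNIV. \<Sum>j<J. g (Some (k, j)))"
    by (simp add: sum.cartesian_product)
  finally show ?thesis .
qed

lemma trunc_as_sum: "trunc_fun (psi :: 'p::finite \<Rightarrow> nat \<Rightarrow> real \<Rightarrow> real) J a c v = (\<Sum>\<iota>\<in>bidx J. bcoef a c \<iota> * bphi psi \<iota> v)"
  by (simp add: sum_bidx trunc_fun_def bcoef_def bphi_def)

lemma coef_sum: "a * a' + (\<Sum>k\<in>UNIV. \<Sum>j<J. (c :: 'p::finite \<Rightarrow> nat \<Rightarrow> real) k j * c' k j)
   = (\<Sum>\<iota>\<in>bidx J. bcoef a c \<iota> * bcoef a' c' \<iota>)"
  by (simp only: sum_bidx) (simp add: bcoef_def)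

context psi_sys begin

lemma bphi_m[measurable]: "bphi psi \<iota> \<in> borel_measurable borel"
  unfolding bphi_def[abs_def] by (cases \<iota>) auto

lemma bphi_bnd: "v \<in> unit_cube \<Longrightarrow> \<bar>bphi psi \<iota> v\<bar> \<le> Mpsi"
  using Mpsi psi_bnd by (cases \<iota>) (auto simp: bphi_def unit_cube_def)

lemma bphi_orth: "(LINT v:unit_cube|lborel. bphi psi \<iota> v * bphi psi \<iota>' v) = (if \<iota> = \<iota>' then 1 else 0)"
proof (cases \<iota>)
  case None
  then show ?thesis
  proof (cases \<iota>')
    case (Some x) then obtain k j where "x = (k, j)" by force
    then show ?thesis using None Some cube_single by (simp add: bphi_def)
  qed (simp add: bphi_def cube_one)
next
  case (Some x) then obtain k j where x: "x = (k, j)" by force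
  then show ?thesis
  proof (cases \<iota>')
    case (Some y) then obtain k' j' where "y = (k', j')" by force
    then show ?thesis using x \<open>\<iota> = Some x\<close> Some cube_pair by (simp add: bphi_def)
  qed (use cube_single \<open>\<iota> = Some x\<close> in \<open>simp add: bphi_def\<close>)
qed

lemma inner_trunc:
  "L2_inner (trunc_fun psi J a c) (trunc_fun psi J a' c') = a * a' + (\<Sum>k\<in>UNIV. \<Sum>j<J. c k j * c' k j)"
proof -
  have int: "set_integrable lborel unit_cube (\<lambda>v. bphi psi \<iota> v * bphi psi \<iota>' v)" for \<iota> \<iota>'
  proof (rule set_integrable_cube[where C="Mpsi * Mpsi"])
    show "(\<lambda>v. bphi psi \<iota> v * bphi psi \<iota>' v) \<in> borel_measurable borel" by measurable
    fix x :: "real^'p" assume "x \<in> unit_cube"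
    then show "\<bar>bphi psi \<iota> x * bphi psi \<iota>' x\<bar> \<le> Mpsi * Mpsi"
      unfolding abs_mult using bphi_bnd Mpsi by (intro mult_mono) auto
  qed
  have "L2_inner (trunc_fun psi J a c) (trunc_fun psi J a' c')
     = (LINT v:unit_cube|lborel. \<Sum>\<iota>\<in>bidx J. \<Sum>\<iota>'\<in>bidx J. (bcoef a c \<iota> * bcoef a' c' \<iota>') * (bphi psi \<iota> v * bphi psi \<iota>' v))"
    unfolding L2_inner_def trunc_as_sum[of psi J] sum_product
    by (simp add: algebra_simps)
  also have "\<dots> = (\<Sum>\<iota>\<in>bidx J. \<Sum>\<iota>'\<in>bidx J. (bcoef a c \<iota> * bcoef a' c' \<iota>') * (LINT v:unit_cube|lborel. bphi psi \<iota> v * bphi psi \<iota>' v))"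
    using int by (simp add: set_int_sum set_integrable_sum')
  also have "\<dots> = (\<Sum>\<iota>\<in>bidx J. bcoef a c \<iota> * bcoef a' c' \<iota>)"
    by (simp add: bphi_orth if_distrib sum.delta cong: if_cong)
  finally show ?thesis by (simp add: coef_sum)
qed

end

lemma set_integrable_cube':
  fixes f :: "real^'p::finite \<Rightarrow> real"
  assumes "(\<lambda>x. indicator unit_cube x * f x) \<in> borel_measurable borel" "\<And>x. x \<in> unit_cube \<Longrightarrow> \<bar>f x\<bar> \<le> C"
  shows "set_integrable lborel unit_cube f"
proof -
  have "set_integrable lborel unit_cube (\<lambda>x. indicator unit_cube x * f x)"
    by (rule set_integrable_bdd[OF cube_sets cube_finite assms(1)]) (use assms(2) in auto)
  moreover have "(\<lambda>x. indicator unit_cube x *\<^sub>R (indicator unit_cube x * f x)) = (\<lambda>x. indicator unit_cube x *\<^sub>R f x)"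
    by (auto simp: fun_eq_iff indicator_def)
  ultimately show ?thesis unfolding set_integrable_def by simp
qed

context psi_sys begin

lemma trunc_m[measurable]: "trunc_fun psi J a c \<in> borel_measurable borel"
  unfolding trunc_fun_def[abs_def] by measurable

lemma trunc_bnd:
  assumes "x \<in> unit_cube"
  shows "\<bar>trunc_fun psi J a c x\<bar> \<le> \<bar>a\<bar> + Mpsi * (\<Sum>k\<in>UNIV. \<Sum>j<J. \<bar>c k j\<bar>)"
proof -
  have "\<bar>trunc_fun psi J a c x\<bar> \<le> \<bar>a\<bar> + (\<Sum>k\<in>UNIV. \<Sum>j<J. \<bar>c k j * psi k j (x$k)\<bar>)"
    unfolding trunc_fun_def
    by (rule order.trans[OF abs_triangle_ineq add_left_mono]
        order.trans[OF sum_abs sum_mono] sum_abs)+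
  also have "\<dots> \<le> \<bar>a\<bar> + (\<Sum>k\<in>UNIV. \<Sum>j<J. Mpsi * \<bar>c k j\<bar>)"
  proof (intro add_left_mono sum_mono)
    fix k j
    have "\<bar>psi k j (x$k)\<bar> \<le> Mpsi" using psi_bnd assms by (auto simp: unit_cube_def)
    then show "\<bar>c k j * psi k j (x$k)\<bar> \<le> Mpsi * \<bar>c k j\<bar>"
      unfolding abs_mult by (metis abs_ge_zero mult.commute mult_right_mono)
  qed
  finally show ?thesis by (simp add: sum_distrib_left)
qed

lemma trunc_bnd_R:
  assumes "x \<in> unit_cube" "\<bar>a\<bar> + (\<Sum>k\<in>UNIV. \<Sum>j<J. \<bar>c k j\<bar>) \<le> R"
  shows "\<bar>trunc_fun psi J a c x\<bar> \<le> Mpsi * R"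
proof -
  have "\<bar>a\<bar> \<le> Mpsi * \<bar>a\<bar>" using Mpsi by (simp add: mult_le_cancel_right1)
  then have "\<bar>a\<bar> + Mpsi * (\<Sum>k\<in>UNIV. \<Sum>j<J. \<bar>c k j\<bar>) \<le> Mpsi * (\<bar>a\<bar> + (\<Sum>k\<in>UNIV. \<Sum>j<J. \<bar>c k j\<bar>))"
    by (simp add: distrib_left)
  also have "\<dots> \<le> Mpsi * R" using assms(2) Mpsi by (intro mult_left_mono) auto
  finally show ?thesis using trunc_bnd[OF assms(1), of J a c] by linarith
qed

lemma trunc_diff: "trunc_fun psi J a c x - trunc_fun psi J a' c' x = trunc_fun psi J (a - a') (\<lambda>k j. c k j - c' k j) x"
  by (simp add: trunc_fun_def algebra_simps sum_subtractf)

lemma kernel_trunc: "kernel_t psi J u = trunc_fun psi J 1 (\<lambda>k j. psi k j (u$k))"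
  by (simp add: fun_eq_iff kernel_t_def trunc_fun_def)

lemma trunc_span: "trunc_fun psi J a c \<in> basis_span psi J"
  by (auto simp: basis_span_def)

end

locale q_sys = psi_sys psi Mpsi
  for psi :: "'p::finite \<Rightarrow> nat \<Rightarrow> real \<Rightarrow> real" and Mpsi :: real +
  fixes q :: "real^'p \<Rightarrow> real" and alpha_s R :: real and theta_s :: "'p \<Rightarrow> nat \<Rightarrow> real"
  assumes q_expansion: "\<forall>x. q x = alpha_s + (\<Sum>k\<in>UNIV. \<Sum>j. theta_s k j * psi k j (x$k))"
    and theta_s_summable: "\<forall>k. summable (\<lambda>j. \<bar>theta_s k j\<bar>)"
    and theta_s_l1: "\<bar>alpha_s\<bar> + (\<Sum>k\<in>UNIV. \<Sum>j. \<bar>theta_s k j\<bar>) \<le> R"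
begin

lemma term_summable:
  assumes "x \<in> unit_cube"
  shows "summable (\<lambda>j. \<bar>theta_s k j * psi k j (x$k)\<bar>)"
    and "\<bar>\<Sum>j. theta_s k j * psi k j (x$k)\<bar> \<le> Mpsi * (\<Sum>j. \<bar>theta_s k j\<bar>)"
proof -
  have b: "\<bar>theta_s k j * psi k j (x$k)\<bar> \<le> Mpsi * \<bar>theta_s k j\<bar>" for j
  proof -
    have "\<bar>psi k j (x$k)\<bar> \<le> Mpsi" using psi_bnd assms by (auto simp: unit_cube_def)
    then show ?thesis unfolding abs_mult by (metis abs_ge_zero mult.commute mult_right_mono)
  qed
  have s: "summable (\<lambda>j. Mpsi * \<bar>theta_s k j\<bar>)"
    using theta_s_summable by (intro summable_mult) auto
  show sa: "summable (\<lambda>j. \<bar>theta_s k j * psi k j (x$k)\<bar>)"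
    by (rule summable_comparison_test[OF _ s]) (use b in auto)
  have "\<bar>\<Sum>j. theta_s k j * psi k j (x$k)\<bar> \<le> (\<Sum>j. \<bar>theta_s k j * psi k j (x$k)\<bar>)"
    by (rule summable_rabs[OF sa])
  also have "\<dots> \<le> (\<Sum>j. Mpsi * \<bar>theta_s k j\<bar>)"
    by (rule suminf_le[OF b sa s])
  also have "\<dots> = Mpsi * (\<Sum>j. \<bar>theta_s k j\<bar>)"
    using theta_s_summable by (intro suminf_mult) auto
  finally show "\<bar>\<Sum>j. theta_s k j * psi k j (x$k)\<bar> \<le> Mpsi * (\<Sum>j. \<bar>theta_s k j\<bar>)" .
qed

lemma q_bnd:
  assumes "x \<in> unit_cube"
  shows "\<bar>q x\<bar> \<le> Mpsi * R"
proof -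
  have "\<bar>q x\<bar> \<le> \<bar>alpha_s\<bar> + (\<Sum>k\<in>UNIV. \<bar>\<Sum>j. theta_s k j * psi k j (x$k)\<bar>)"
    unfolding q_expansion[rule_format]
    by (rule order.trans[OF abs_triangle_ineq add_left_mono[OF sum_abs]])
  also have "\<dots> \<le> \<bar>alpha_s\<bar> + (\<Sum>k\<in>UNIV. Mpsi * (\<Sum>j. \<bar>theta_s k j\<bar>))"
    by (intro add_left_mono sum_mono term_summable(2)[OF assms])
  also have "\<dots> \<le> Mpsi * (\<bar>alpha_s\<bar> + (\<Sum>k\<in>UNIV. \<Sum>j. \<bar>theta_s k j\<bar>))"
  proof -
    have "\<bar>alpha_s\<bar> \<le> Mpsi * \<bar>alpha_s\<bar>" using Mpsi by (simp add: mult_le_cancel_right1)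
    then show ?thesis by (simp add: distrib_left sum_distrib_left)
  qed
  also have "\<dots> \<le> Mpsi * R" using theta_s_l1 Mpsi by (intro mult_left_mono) auto
  finally show ?thesis .
qed

lemma q_meas: "(\<lambda>x. indicator unit_cube x * q x) \<in> borel_measurable borel"
proof (rule borel_measurable_LIMSEQ_real)
  fix x :: "real^'p"
  show "(\<lambda>n. indicator unit_cube x * (alpha_s + (\<Sum>k\<in>UNIV. \<Sum>j<n. theta_s k j * psi k j (x$k))))
        \<longlonglongrightarrow> indicator unit_cube x * q x"
  proof (cases "x \<in> unit_cube")
    case True
    have "(\<lambda>n. \<Sum>j<n. theta_s k j * psi k j (x$k)) \<longlonglongrightarrow> (\<Sum>j. theta_s k j * psi k j (x$k))" for k
      by (rule summable_LIMSEQ) (rule summable_rabs_cancel[OF term_summable(1)[OF True]])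
    then have "(\<lambda>n. alpha_s + (\<Sum>k\<in>UNIV. \<Sum>j<n. theta_s k j * psi k j (x$k))) \<longlonglongrightarrow> q x"
      unfolding q_expansion[rule_format] by (intro tendsto_add tendsto_const tendsto_sum) auto
    then show ?thesis using True by simp
  qed simp
next
  fix n
  show "(\<lambda>x::real^'p. indicator unit_cube x * (alpha_s + (\<Sum>k\<in>UNIV. \<Sum>j<n. theta_s k j * psi k j (x$k))))
     \<in> borel_measurable borel" by measurable
qed

end

lemma key_ineq:
  fixes p h e D c1 c2 C1 C2 :: real
  assumes p: "C1 \<le> p" "p \<le> C2" and pos: "0 < C1" "0 < c1" "c1 \<le> c2"
    and up: "h - e \<ge> 0 \<Longrightarrow> c1 * (h - e) \<le> D \<and> D \<le> c2 * (h - e)"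
    and dn: "h - e \<le> 0 \<Longrightarrow> c2 * (h - e) \<le> D \<and> D \<le> c1 * (h - e)"
  shows "2 * p * h * (- D) \<le> -(c1*C1) * h^2 + (c2^2*C2^2/(c1*C1)) * e^2"
proof -
  obtain w where w: "c1 \<le> w" "w \<le> c2" "D = w * (h - e)"
  proof (cases "h - e = 0")
    case True
    then have "D = 0" using up dn by force
    then show ?thesis using that[of c1] True pos by auto
  next
    case False
    show ?thesis
    proof (rule that[of "D / (h - e)"])
      show "D = D / (h - e) * (h - e)" using False by simp
      show "c1 \<le> D / (h - e)"
      proof (cases "h - e > 0")
        case True then show ?thesis using up by (simp add: le_divide_eq)
      next
        case False': False
        then have "h - e < 0" using False by linarith
        then show ?thesis using dn by (simp add: le_divide_eq)
      qed
      show "D / (h - e) \<le> c2"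
      proof (cases "h - e > 0")
        case True then show ?thesis using up by (simp add: divide_le_eq)
      next
        case False': False
        then have "h - e < 0" using False by linarith
        then show ?thesis using dn by (simp add: divide_le_eq)
      qed
    qed
  qed
  define W where "W = p * w"
  have W1: "c1 * C1 \<le> W"
  proof -
    have "c1 * C1 \<le> w * p" using w p pos by (intro mult_mono) auto
    then show ?thesis unfolding W_def by (simp add: mult.commute)
  qed
  have W2: "W \<le> c2 * C2"
  proof -
    have "p * w \<le> C2 * c2" using w p pos by (intro mult_mono) auto
    then show ?thesis unfolding W_def by (simp add: mult.commute)
  qed
  have W0: "0 \<le> W" using W1 pos by (meson less_imp_le mult_pos_pos order.trans)
  have "2 * p * h * (- D) = -2 * W * h^2 + 2 * W * (e * h)"
    unfolding W_def w(3) by (simp add: algebra_simps power2_eq_square)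
  also have "\<dots> \<le> -2 * W * h^2 + W * (h^2 + e^2)"
  proof -
    have "0 \<le> (h - e)^2" by simp
    then have "2 * (e * h) \<le> h^2 + e^2" by (simp add: power2_eq_square algebra_simps)
    then have "W * (2 * (e * h)) \<le> W * (h^2 + e^2)" using W0 by (rule mult_left_mono)
    then show ?thesis by simp
  qed
  also have "\<dots> = - W * h^2 + W * e^2" by (simp add: algebra_simps)
  also have "\<dots> \<le> -(c1*C1) * h^2 + (c2 * C2) * e^2"
    using W1 W2 by (intro add_mono) (auto intro: mult_right_mono)
  also have "(c2 * C2) * e^2 \<le> (c2^2*C2^2/(c1*C1)) * e^2"
  proof (intro mult_right_mono)
    have cc: "0 < c1 * C1" using pos by simp
    have "c1 * C1 \<le> c2 * C2" using W1 W2 by linarith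
    then have "(c2 * C2) * (c1 * C1) \<le> (c2 * C2) * (c2 * C2)"
      using cc by (intro mult_left_mono) auto
    then show "c2 * C2 \<le> c2^2*C2^2/(c1*C1)"
      using cc by (simp add: le_divide_eq power2_eq_square algebra_simps)
  qed simp
  finally show ?thesis by simp
qed


lemma cdf_diff_le:
  fixes g :: "real \<Rightarrow> real"
  assumes int: "integrable lborel g" and bnd: "\<And>y. y \<in> {-B..B} \<Longrightarrow> c1 \<le> g y \<and> g y \<le> c2"
    and uv: "u \<in> {-B..B}" "v \<in> {-B..B}" "v \<le> u"
  shows "c1 * (u - v) \<le> (LINT y:{..u}|lborel. g y) - (LINT y:{..v}|lborel. g y)"
    and "(LINT y:{..u}|lborel. g y) - (LINT y:{..v}|lborel. g y) \<le> c2 * (u - v)"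
proof -
  have si: "set_integrable lborel A g" if "A \<in> sets lborel" for A
    unfolding set_integrable_def using that int by (rule integrable_mult_indicator)
  have un: "{..u} = {..v} \<union> {v<..u}" using uv by auto
  have eq: "(LINT y:{..u}|lborel. g y) - (LINT y:{..v}|lborel. g y) = (LINT y:{v<..u}|lborel. g y)"
    unfolding un by (subst set_integral_Un) (auto intro!: si)
  have c: "(LINT y:{v<..u}|lborel. c) = c * (u - v)" for c :: real
    using uv by (subst set_integral_const) auto
  have sc: "set_integrable lborel {v<..u} (\<lambda>_. c)" for c :: real
    unfolding set_integrable_def
    by (rule integrableI_bounded_set_indicator[where B="\<bar>c\<bar>"]) (use uv in \<open>auto simp: emeasure_lborel_Ioc\<close>)
  have sub: "y \<in> {v<..u} \<Longrightarrow> y \<in> {-B..B}" for y using uv by auto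
  show "c1 * (u - v) \<le> (LINT y:{..u}|lborel. g y) - (LINT y:{..v}|lborel. g y)"
    unfolding eq c[symmetric] by (rule set_integral_mono[OF sc si]) (use bnd sub in auto)
  show "(LINT y:{..u}|lborel. g y) - (LINT y:{..v}|lborel. g y) \<le> c2 * (u - v)"
    unfolding eq c[symmetric] by (rule set_integral_mono[OF si sc]) (use bnd sub in auto)
qed

lemma cdf_diff:
  fixes g :: "real \<Rightarrow> real"
  assumes int: "integrable lborel g" and bnd: "\<And>y. y \<in> {-B..B} \<Longrightarrow> c1 \<le> g y \<and> g y \<le> c2"
    and uv: "u \<in> {-B..B}" "v \<in> {-B..B}"
  shows "u - v \<ge> 0 \<Longrightarrow> c1 * (u - v) \<le> (LINT y:{..u}|lborel. g y) - (LINT y:{..v}|lborel. g y)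
            \<and> (LINT y:{..u}|lborel. g y) - (LINT y:{..v}|lborel. g y) \<le> c2 * (u - v)"
    and "u - v \<le> 0 \<Longrightarrow> c2 * (u - v) \<le> (LINT y:{..u}|lborel. g y) - (LINT y:{..v}|lborel. g y)
            \<and> (LINT y:{..u}|lborel. g y) - (LINT y:{..v}|lborel. g y) \<le> c1 * (u - v)"
proof -
  assume "u - v \<ge> 0"
  then show "c1 * (u - v) \<le> (LINT y:{..u}|lborel. g y) - (LINT y:{..v}|lborel. g y)
            \<and> (LINT y:{..u}|lborel. g y) - (LINT y:{..v}|lborel. g y) \<le> c2 * (u - v)"
    using cdf_diff_le[OF int bnd uv] by auto
next
  assume "u - v \<le> 0"
  then have "u \<le> v" by simp
  from cdf_diff_le[OF int bnd uv(2,1) this]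
  show "c2 * (u - v) \<le> (LINT y:{..u}|lborel. g y) - (LINT y:{..v}|lborel. g y)
            \<and> (LINT y:{..u}|lborel. g y) - (LINT y:{..v}|lborel. g y) \<le> c1 * (u - v)"
    by (auto simp: algebra_simps)
qed


lemma meas_if_le:
  fixes f g :: "'a \<Rightarrow> real"
  assumes [measurable]: "f \<in> borel_measurable M" "g \<in> borel_measurable M"
  shows "(\<lambda>x. if g x \<le> f x then 1 else (0::real)) \<in> borel_measurable M"
  by (rule measurable_If) auto

locale model = q_sys psi Mpsi q alpha_s R theta_s
  for psi :: "'p::finite \<Rightarrow> nat \<Rightarrow> real \<Rightarrow> real" and Mpsi q alpha_s R theta_s +
  fixes pX :: "real^'p \<Rightarrow> real" and pYX :: "real^'p \<Rightarrow> real \<Rightarrow> real"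
    and tau C1 C2 c1 c2 :: real and J :: nat and ac :: real and cc :: "'p \<Rightarrow> nat \<Rightarrow> real"
    and checkq :: "real^'p \<Rightarrow> real"
  assumes pX_meas: "pX \<in> borel_measurable borel"
    and pX_nonneg: "\<forall>x. 0 \<le> pX x"
    and pX_zero: "\<forall>x. x \<notin> unit_cube \<longrightarrow> pX x = 0"
    and A1: "C1 > 0" "\<forall>x\<in>unit_cube. C1 \<le> pX x \<and> pX x \<le> C2"
    and pYX_meas: "(\<lambda>(x, y). pYX x y) \<in> borel_measurable borel"
    and pYX_nonneg: "\<forall>x y. 0 \<le> pYX x y"
    and pYX_density: "\<forall>x\<in>unit_cube. integrable lborel (pYX x) \<and> (\<integral>y. pYX x y \<partial>lborel) = 1"
    and A2: "c1 > 0" "\<forall>x\<in>unit_cube. \<forall>y\<in>{-(Mpsi*R)..Mpsi*R}. c1 \<le> pYX x y \<and> pYX x y \<le> c2"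
    and quantile: "\<forall>x\<in>unit_cube. (LINT y:{..q x}|lborel. pYX x y) = tau"
    and checkq_eq: "checkq = trunc_fun psi J ac cc"
    and proj_orth: "\<forall>g\<in>basis_span psi J. L2_inner (\<lambda>x. q x - checkq x) g = 0"
begin

lemma pX_m[measurable]: "pX \<in> borel_measurable borel" by (rule pX_meas)
lemma pYX_m[measurable]: "(\<lambda>z. pYX (fst z) (snd z)) \<in> borel_measurable (borel \<Otimes>\<^sub>M borel)"
  using pYX_meas by (simp add: case_prod_beta' borel_prod)
lemma checkq_m[measurable]: "checkq \<in> borel_measurable borel"
  unfolding checkq_eq by (rule trunc_m)

definition Cq where "Cq = \<bar>ac\<bar> + Mpsi * (\<Sum>k\<in>UNIV. \<Sum>j<J. \<bar>cc k j\<bar>)"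

lemma checkq_bnd: "x \<in> unit_cube \<Longrightarrow> \<bar>checkq x\<bar> \<le> Cq"
  unfolding checkq_eq Cq_def by (rule trunc_bnd)

lemma Cq_nn: "0 \<le> Cq"
proof -
  have x0: "(0::real^'p) \<in> unit_cube" by (simp add: unit_cube_def)
  show ?thesis using checkq_bnd[OF x0] by linarith
qed

lemma e_sq_int: "set_integrable lborel unit_cube (\<lambda>v. (q v - checkq v) * (q v - checkq v))"
proof (rule set_integrable_cube'[where C="(Mpsi * R + Cq)^2"])
  have "(\<lambda>x. indicator unit_cube x * ((q x - checkq x) * (q x - checkq x)))
      = (\<lambda>x. (indicator unit_cube x * q x - indicator unit_cube x * checkq x) *
              (indicator unit_cube x * q x - indicator unit_cube x * checkq x))"
    by (auto simp: fun_eq_iff indicator_def)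
  also have "\<dots> \<in> borel_measurable borel" using q_meas by measurable
  finally show "(\<lambda>x. indicator unit_cube x * ((q x - checkq x) * (q x - checkq x))) \<in> borel_measurable borel" .
next
  fix x :: "real^'p" assume x: "x \<in> unit_cube"
  have "\<bar>q x - checkq x\<bar> \<le> Mpsi * R + Cq"
    using q_bnd[OF x] checkq_bnd[OF x] by linarith
  then have "\<bar>q x - checkq x\<bar> * \<bar>q x - checkq x\<bar> \<le> (Mpsi * R + Cq) * (Mpsi * R + Cq)"
    by (intro mult_mono) auto
  then show "\<bar>(q x - checkq x) * (q x - checkq x)\<bar> \<le> (Mpsi * R + Cq)^2"
    by (simp add: power2_eq_square abs_mult)
qed

lemma c1_le_c2: "c1 \<le> c2" and B_nonneg: "0 \<le> Mpsi * R"
proof -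
  have x0: "(0::real^'p) \<in> unit_cube" by (simp add: unit_cube_def)
  show B: "0 \<le> Mpsi * R" using q_bnd[OF x0] by linarith
  then show "c1 \<le> c2" using A2(2) x0 by force
qed

end

context model begin

lemma inner_bound:
  fixes a :: real and c :: "'p \<Rightarrow> nat \<Rightarrow> real"
  assumes coef: "\<bar>a\<bar> + (\<Sum>k\<in>UNIV. \<Sum>j<J. \<bar>c k j\<bar>) \<le> R"
    and dens_int: "integrable lborel (\<lambda>z::((real^'p) \<times> real). pX (fst z) * pYX (fst z) (snd z))"
  defines "f \<equiv> trunc_fun psi J a c"
  defines "\<psi> \<equiv> \<lambda>z::((real^'p)\<times>real). (tau - (if snd z \<le> f (fst z) then 1 else 0)) * (f (fst z) - checkq (fst z))"
  shows "integrable lborel (\<lambda>z. pX (fst z) * pYX (fst z) (snd z) * \<psi> z)"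
    and "2 * (\<integral>z. pX (fst z) * pYX (fst z) (snd z) * \<psi> z \<partial>lborel)
         \<le> -(c1*C1) * L2_inner (\<lambda>v. f v - checkq v) (\<lambda>v. f v - checkq v)
           + (c2^2*C2^2/(c1*C1)) * L2_inner (\<lambda>v. q v - checkq v) (\<lambda>v. q v - checkq v)"
proof -
  define Cb where "Cb = (\<bar>tau\<bar> + 1) * (Mpsi * R + Cq)"
  define F where "F = (\<lambda>z::((real^'p) \<times> real). pX (fst z) * pYX (fst z) (snd z) * \<psi> z)"
  define h where "h = (\<lambda>v. f v - checkq v)"
  define e where "e = (\<lambda>v. q v - checkq v)"
  define KK where "KK = c2^2*C2^2/(c1*C1)"
  have f_m[measurable]: "f \<in> borel_measurable borel" unfolding f_def by (rule trunc_m)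
  have h_m[measurable]: "h \<in> borel_measurable borel" unfolding h_def by measurable
  have ind_m[measurable]: "(\<lambda>z::(real^'p)\<times>real. if snd z \<le> f (fst z) then 1 else (0::real)) \<in> borel_measurable (borel \<Otimes>\<^sub>M borel)"
    by (rule meas_if_le) measurable
  have psi_m': "\<psi> \<in> borel_measurable (borel \<Otimes>\<^sub>M borel)"
  proof -
    have hm: "(\<lambda>z::(real^'p)\<times>real. f (fst z) - checkq (fst z)) \<in> borel_measurable (borel \<Otimes>\<^sub>M borel)"
      by measurable
    show ?thesis unfolding \<psi>_def
      by (rule borel_measurable_times[OF borel_measurable_diff[OF measurable_const ind_m] hm]) simp
  qed
  have psi_m[measurable]: "\<psi> \<in> borel_measurable borel" using psi_m' by (simp add: borel_prod)
  have F_m': "F \<in> borel_measurable (borel \<Otimes>\<^sub>M borel)" unfolding F_def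
    by (rule borel_measurable_times[OF _ psi_m']) measurable
  have F_m[measurable]: "F \<in> borel_measurable borel" using F_m' by (simp add: borel_prod)
  have f_bnd: "x \<in> unit_cube \<Longrightarrow> \<bar>f x\<bar> \<le> Mpsi * R" for x
    unfolding f_def by (rule trunc_bnd_R[OF _ coef])
  have h_bnd: "x \<in> unit_cube \<Longrightarrow> \<bar>h x\<bar> \<le> Mpsi * R + Cq" for x
    using f_bnd[of x] checkq_bnd[of x] unfolding h_def by linarith
  have psi_bnd': "\<bar>\<psi> z\<bar> \<le> Cb" if "fst z \<in> unit_cube" for z
  proof -
    have "\<bar>tau - (if snd z \<le> f (fst z) then 1 else 0)\<bar> \<le> \<bar>tau\<bar> + 1" by auto
    moreover have "\<bar>f (fst z) - checkq (fst z)\<bar> \<le> Mpsi * R + Cq"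
      using h_bnd[OF that] unfolding h_def .
    ultimately show ?thesis unfolding \<psi>_def Cb_def abs_mult
      by (intro mult_mono) auto
  qed
  have dens_nn: "0 \<le> pX (fst z) * pYX (fst z) (snd z)" for z
    using pX_nonneg pYX_nonneg by auto
  show intF: "integrable lborel (\<lambda>z. pX (fst z) * pYX (fst z) (snd z) * \<psi> z)"
  proof (rule Bochner_Integration.integrable_bound[where f="\<lambda>z. Cb * (pX (fst z) * pYX (fst z) (snd z))"])
    show "integrable lborel (\<lambda>z. Cb * (pX (fst z) * pYX (fst z) (snd z)))"
      using dens_int by simp
    show "(\<lambda>z. pX (fst z) * pYX (fst z) (snd z) * \<psi> z) \<in> borel_measurable lborel"
      using F_m unfolding F_def by simp
    show "AE z in lborel. norm (pX (fst z) * pYX (fst z) (snd z) * \<psi> z)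
             \<le> norm (Cb * (pX (fst z) * pYX (fst z) (snd z)))"
    proof (rule AE_I2)
      fix z :: "(real^'p) \<times> real"
      show "norm (pX (fst z) * pYX (fst z) (snd z) * \<psi> z) \<le> norm (Cb * (pX (fst z) * pYX (fst z) (snd z)))"
      proof (cases "fst z \<in> unit_cube")
        case True
        have "\<bar>pX (fst z) * pYX (fst z) (snd z)\<bar> * \<bar>\<psi> z\<bar> \<le> \<bar>pX (fst z) * pYX (fst z) (snd z)\<bar> * Cb"
          using psi_bnd'[OF True] by (intro mult_left_mono) auto
        moreover have "0 \<le> Cb" unfolding Cb_def using Cq_nn B_nonneg by simp
        ultimately show ?thesis by (simp add: abs_mult mult.commute)
      next
        case False then show ?thesis using pX_zero by simp
      qed
    qed
  qed
  have pair: "pair_sigma_finite lborel lborel"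
    by (simp add: pair_sigma_finite_def sigma_finite_lborel)
  have int2: "integrable (lborel \<Otimes>\<^sub>M lborel) F"
    unfolding lborel_prod F_def by (rule intF)
  have fub: "(\<integral>z. F z \<partial>lborel) = (\<integral>x. (\<integral>y. F (x, y) \<partial>lborel) \<partial>lborel)"
    using pair_sigma_finite.integral_fst'[OF pair int2] unfolding lborel_prod by simp
  have intx: "integrable lborel (\<lambda>x. \<integral>y. F (x, y) \<partial>lborel)"
    by (rule pair_sigma_finite.integrable_fst'[OF pair int2])
  define G where "G = (\<lambda>x. indicator unit_cube x * (pX x * h x * (tau - (LINT y:{..f x}|lborel. pYX x y))))"
  have inner: "(\<integral>y. F (x, y) \<partial>lborel) = G x" for x
  proof (cases "x \<in> unit_cube")
    case False then show ?thesis using pX_zero by (simp add: F_def G_def)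
  next
    case True
    have i1: "integrable lborel (pYX x)" using pYX_density True by auto
    have i2: "integrable lborel (\<lambda>y. indicator {..f x} y *\<^sub>R pYX x y)"
      by (rule integrable_mult_indicator[OF _ i1]) auto
    have "(\<integral>y. F (x, y) \<partial>lborel) = (\<integral>y. (pX x * h x) * (tau * pYX x y - indicator {..f x} y *\<^sub>R pYX x y) \<partial>lborel)"
      unfolding F_def \<psi>_def h_def
      by (intro Bochner_Integration.integral_cong) (auto simp: indicator_def algebra_simps)
    also have "\<dots> = (pX x * h x) * (tau * (\<integral>y. pYX x y \<partial>lborel) - (\<integral>y. indicator {..f x} y *\<^sub>R pYX x y \<partial>lborel))"
      using i1 i2 by simp
    also have "\<dots> = G x"
      using True pYX_density by (simp add: G_def set_lebesgue_integral_def)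
    finally show ?thesis .
  qed
  have intG: "integrable lborel G"
    using intx by (simp add: inner)
  have pt: "2 * G x \<le> indicator unit_cube x * (-(c1*C1) * (h x * h x) + KK * (e x * e x))" for x
  proof (cases "x \<in> unit_cube")
    case False then show ?thesis by (simp add: G_def)
  next
    case True
    define Fx where "Fx = (\<lambda>u. LINT y:{..u}|lborel. pYX x y)"
    have i1: "integrable lborel (pYX x)" using pYX_density True by auto
    have bnd: "\<And>y. y \<in> {-(Mpsi*R)..Mpsi*R} \<Longrightarrow> c1 \<le> pYX x y \<and> pYX x y \<le> c2"
      using A2(2) True by auto
    have u: "f x \<in> {-(Mpsi*R)..Mpsi*R}" using f_bnd[OF True] by auto
    have v: "q x \<in> {-(Mpsi*R)..Mpsi*R}" using q_bnd[OF True] by auto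
    have tau_eq: "tau = Fx (q x)" using quantile True by (simp add: Fx_def)
    have hd: "h x - e x = f x - q x" by (simp add: h_def e_def)
    have key: "2 * pX x * h x * (- (Fx (f x) - Fx (q x))) \<le> -(c1*C1) * (h x)^2 + KK * (e x)^2"
      unfolding KK_def
    proof (rule key_ineq)
      show "C1 \<le> pX x" "pX x \<le> C2" using A1(2) True by auto
      show "0 < C1" "0 < c1" "c1 \<le> c2" using A1(1) A2(1) c1_le_c2 by auto
      show "h x - e x \<ge> 0 \<Longrightarrow> c1 * (h x - e x) \<le> Fx (f x) - Fx (q x) \<and> Fx (f x) - Fx (q x) \<le> c2 * (h x - e x)"
        unfolding hd Fx_def by (rule cdf_diff(1)[OF i1 bnd u v])
      show "h x - e x \<le> 0 \<Longrightarrow> c2 * (h x - e x) \<le> Fx (f x) - Fx (q x) \<and> Fx (f x) - Fx (q x) \<le> c1 * (h x - e x)"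
        unfolding hd Fx_def by (rule cdf_diff(2)[OF i1 bnd u v])
    qed
    have "2 * G x = 2 * pX x * h x * (- (Fx (f x) - Fx (q x)))"
      using True by (simp add: G_def Fx_def tau_eq[unfolded Fx_def] algebra_simps)
    then show ?thesis using key True by (simp add: power2_eq_square)
  qed
  have hh_int: "set_integrable lborel unit_cube (\<lambda>v. h v * h v)"
  proof (rule set_integrable_cube[where C="(Mpsi * R + Cq) * (Mpsi * R + Cq)"])
    show "(\<lambda>v. h v * h v) \<in> borel_measurable borel" by measurable
    fix x :: "real^'p" assume "x \<in> unit_cube"
    then show "\<bar>h x * h x\<bar> \<le> (Mpsi * R + Cq) * (Mpsi * R + Cq)"
      using h_bnd Cq_nn B_nonneg unfolding abs_mult by (intro mult_mono) auto
  qed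
  have ee_int: "set_integrable lborel unit_cube (\<lambda>v. e v * e v)"
    using e_sq_int unfolding e_def .
  define RH where "RH = (\<lambda>x. -(c1*C1) * (indicator unit_cube x * (h x * h x)) + KK * (indicator unit_cube x * (e x * e x)))"
  have i_hh: "integrable lborel (\<lambda>x. indicator unit_cube x * (h x * h x))"
    using hh_int unfolding set_integrable_def by simp
  have i_ee: "integrable lborel (\<lambda>x. indicator unit_cube x * (e x * e x))"
    using ee_int unfolding set_integrable_def by simp
  have rhs_int: "integrable lborel RH"
    unfolding RH_def using i_hh i_ee by (intro Bochner_Integration.integrable_add integrable_mult_right)
  have pt': "2 * G x \<le> RH x" for x
    using pt[of x] unfolding RH_def by (simp add: algebra_simps)
  have "2 * (\<integral>z. pX (fst z) * pYX (fst z) (snd z) * \<psi> z \<partial>lborel) = (\<integral>x. 2 * G x \<partial>lborel)"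
    using fub inner unfolding F_def by simp
  also have "\<dots> \<le> (\<integral>x. RH x \<partial>lborel)"
    by (rule integral_mono[OF _ rhs_int pt']) (use intG in simp)
  also have "\<dots> = -(c1*C1) * (\<integral>x. indicator unit_cube x * (h x * h x) \<partial>lborel) + KK * (\<integral>x. indicator unit_cube x * (e x * e x) \<partial>lborel)"
    unfolding RH_def using i_hh i_ee by (simp add: Bochner_Integration.integral_add)
  also have "\<dots> = -(c1*C1) * L2_inner h h + KK * L2_inner e e"
    unfolding L2_inner_def set_lebesgue_integral_def by simp
  finally show "2 * (\<integral>z. pX (fst z) * pYX (fst z) (snd z) * \<psi> z \<partial>lborel)
         \<le> -(c1*C1) * L2_inner (\<lambda>v. f v - checkq v) (\<lambda>v. f v - checkq v)
           + (c2^2*C2^2/(c1*C1)) * L2_inner (\<lambda>v. q v - checkq v) (\<lambda>v. q v - checkq v)"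
    unfolding h_def e_def KK_def .
qed

end

lemma nth_comp_m[measurable (raw)]:
  "f \<in> borel_measurable M \<Longrightarrow> (\<lambda>x. (f x :: real^'n) $ i) \<in> borel_measurable M"
  using measurable_compose[OF _ borel_measurable_nth] by blast

lemma fst_borel[measurable]:
  "fst \<in> measurable (borel::('a::second_countable_topology \<times> 'b::second_countable_topology) measure) borel"
  by (subst borel_prod[symmetric]) (rule measurable_fst)

lemma snd_borel[measurable]:
  "snd \<in> measurable (borel::('a::second_countable_topology \<times> 'b::second_countable_topology) measure) borel"
  by (subst borel_prod[symmetric]) (rule measurable_snd)

lemma fst_comp_m[measurable (raw)]:
  "f \<in> measurable M (borel::('a::second_countable_topology \<times> 'b::second_countable_topology) measure)
   \<Longrightarrow> (\<lambda>x. fst (f x)) \<in> measurable M borel"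
  using measurable_compose[OF _ fst_borel] by blast

lemma snd_comp_m[measurable (raw)]:
  "f \<in> measurable M (borel::('a::second_countable_topology \<times> 'b::second_countable_topology) measure)
   \<Longrightarrow> (\<lambda>x. snd (f x)) \<in> measurable M borel"
  using measurable_compose[OF _ snd_borel] by blast

context model begin

lemma lhs_identity:
  "L2_inner (\<lambda>v. trunc_fun psi J a c v - q v) (\<lambda>v. s * kernel_t psi J x v)
     = s * (trunc_fun psi J a c x - checkq x)"
proof -
  define kk where "kk = trunc_fun psi J 1 (\<lambda>k j. psi k j (x$k))"
  define Ck where "Ck = 1 + Mpsi * (\<Sum>k\<in>UNIV. \<Sum>j<J. \<bar>psi k j (x$k)\<bar>)"
  have kk_eq: "kernel_t psi J x = kk" unfolding kk_def by (rule kernel_trunc)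
  have kk_m[measurable]: "kk \<in> borel_measurable borel" unfolding kk_def by (rule trunc_m)
  have kk_bnd: "v \<in> unit_cube \<Longrightarrow> \<bar>kk v\<bar> \<le> Ck" for v
    unfolding kk_def Ck_def using trunc_bnd[of v J 1] by simp
  have Ck_nn: "0 \<le> Ck"
  proof -
    have x0: "(0::real^'p) \<in> unit_cube" by (simp add: unit_cube_def)
    show ?thesis using kk_bnd[OF x0] by linarith
  qed
  define f where "f = trunc_fun psi J a c"
  have f_m[measurable]: "f \<in> borel_measurable borel" unfolding f_def by (rule trunc_m)
  define Cf where "Cf = \<bar>a\<bar> + Mpsi * (\<Sum>k\<in>UNIV. \<Sum>j<J. \<bar>c k j\<bar>)"
  have f_bnd: "v \<in> unit_cube \<Longrightarrow> \<bar>f v\<bar> \<le> Cf" for v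
    unfolding f_def Cf_def by (rule trunc_bnd)
  have i1: "set_integrable lborel unit_cube (\<lambda>v. (f v - checkq v) * kk v)"
  proof (rule set_integrable_cube[where C="(Cf + Cq) * Ck"])
    show "(\<lambda>v. (f v - checkq v) * kk v) \<in> borel_measurable borel" by measurable
    fix v :: "real^'p" assume v: "v \<in> unit_cube"
    have "\<bar>f v - checkq v\<bar> \<le> Cf + Cq" using f_bnd[OF v] checkq_bnd[OF v] by linarith
    then show "\<bar>(f v - checkq v) * kk v\<bar> \<le> (Cf + Cq) * Ck"
      unfolding abs_mult using kk_bnd[OF v] Ck_nn by (intro mult_mono) auto
  qed
  have i2: "set_integrable lborel unit_cube (\<lambda>v. (q v - checkq v) * kk v)"
  proof (rule set_integrable_cube'[where C="(Mpsi * R + Cq) * Ck"])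
    have "(\<lambda>v. indicator unit_cube v * ((q v - checkq v) * kk v))
        = (\<lambda>v. (indicator unit_cube v * q v - indicator unit_cube v * checkq v) * kk v)"
      by (auto simp: fun_eq_iff indicator_def)
    also have "\<dots> \<in> borel_measurable borel" using q_meas by measurable
    finally show "(\<lambda>v. indicator unit_cube v * ((q v - checkq v) * kk v)) \<in> borel_measurable borel" .
    fix v :: "real^'p" assume v: "v \<in> unit_cube"
    have "\<bar>q v - checkq v\<bar> \<le> Mpsi * R + Cq" using q_bnd[OF v] checkq_bnd[OF v] by linarith
    then show "\<bar>(q v - checkq v) * kk v\<bar> \<le> (Mpsi * R + Cq) * Ck"
      unfolding abs_mult using kk_bnd[OF v] Ck_nn by (intro mult_mono) auto
  qed
  have "L2_inner (\<lambda>v. f v - q v) (\<lambda>v. s * kk v) = s * L2_inner (\<lambda>v. f v - q v) kk"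
    unfolding L2_inner_def by (simp add: mult.left_commute)
  also have "L2_inner (\<lambda>v. f v - q v) kk
      = L2_inner (\<lambda>v. f v - checkq v) kk - L2_inner (\<lambda>v. q v - checkq v) kk"
    unfolding L2_inner_def using set_integral_diff(2)[OF i1 i2]
    by (simp add: algebra_simps)
  also have "L2_inner (\<lambda>v. q v - checkq v) kk = 0"
    using proj_orth trunc_span unfolding kk_def by blast
  also have "(\<lambda>v. f v - checkq v) = trunc_fun psi J (a - ac) (\<lambda>k j. c k j - cc k j)"
    unfolding f_def checkq_eq by (simp add: fun_eq_iff trunc_diff)
  also have "L2_inner (trunc_fun psi J (a - ac) (\<lambda>k j. c k j - cc k j)) kk
     = trunc_fun psi J (a - ac) (\<lambda>k j. c k j - cc k j) x"
    unfolding kk_def inner_trunc by (simp add: trunc_fun_def)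
  also have "\<dots> = f x - checkq x"
    unfolding f_def checkq_eq by (simp add: trunc_diff)
  finally show ?thesis unfolding f_def kk_eq by simp
qed

lemma Hd_eq:
  "L2_inner (\<lambda>v. trunc_fun psi J a c v - checkq v) (\<lambda>v. trunc_fun psi J a c v - checkq v)
    = (a - ac)^2 + (\<Sum>k\<in>UNIV. \<Sum>j<J. (c k j - cc k j)^2)"
proof -
  have "(\<lambda>v. trunc_fun psi J a c v - checkq v) = trunc_fun psi J (a - ac) (\<lambda>k j. c k j - cc k j)"
    unfolding checkq_eq by (simp add: fun_eq_iff trunc_diff)
  then show ?thesis by (simp add: inner_trunc power2_eq_square)
qed

end

theorem lemma1:
  fixes M :: "'a measure"
    and XX :: "nat \<Rightarrow> nat \<Rightarrow> 'a \<Rightarrow> real^'p"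
    and YY :: "nat \<Rightarrow> nat \<Rightarrow> 'a \<Rightarrow> real"
    and n :: "nat \<Rightarrow> nat" and t :: nat
    and tau Mpsi R alpha_s C1 C2 c1 c2 gamma :: real
    and psi :: "'p \<Rightarrow> nat \<Rightarrow> real \<Rightarrow> real"
    and theta_s :: "'p \<Rightarrow> nat \<Rightarrow> real"
    and q checkq pX :: "real^'p \<Rightarrow> real"
    and pYX :: "real^'p \<Rightarrow> real \<Rightarrow> real"
    and J :: nat
    and ahat :: "'a \<Rightarrow> real" and th :: "'a \<Rightarrow> 'p \<Rightarrow> nat \<Rightarrow> real"
  assumes M: "prob_space M"
    and t: "t \<ge> 1" and n_pos: "\<forall>s. n s \<ge> 1"
    and tau: "0 < tau" "tau < 1"
    and Mpsi: "Mpsi \<ge> 1"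
    and psi_meas: "\<forall>k j. psi k j \<in> borel_measurable borel"
    and psi_bnd: "\<forall>k j u. u \<in> {0..1} \<longrightarrow> \<bar>psi k j u\<bar> \<le> Mpsi"
    and psi_centered: "\<forall>k j. (LINT u:{0..1}|lborel. psi k j u) = 0"
    and psi_orthonormal: "\<forall>k j j'. (LINT u:{0..1}|lborel. psi k j u * psi k j' u)
                                      = (if j = j' then 1 else 0)"
    and q_expansion: "\<forall>x. q x = alpha_s + (\<Sum>k\<in>UNIV. \<Sum>j. theta_s k j * psi k j (x$k))"
    and theta_s_summable: "\<forall>k. summable (\<lambda>j. \<bar>theta_s k j\<bar>)"
    and theta_s_l1: "\<bar>alpha_s\<bar> + (\<Sum>k\<in>UNIV. \<Sum>j. \<bar>theta_s k j\<bar>) \<le> R"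
    and pX_meas: "pX \<in> borel_measurable borel"
    and pX_nonneg: "\<forall>x. 0 \<le> pX x"
    and pX_zero: "\<forall>x. x \<notin> unit_cube \<longrightarrow> pX x = 0"
    and A1: "C1 > 0" "\<forall>x\<in>unit_cube. C1 \<le> pX x \<and> pX x \<le> C2"
    and pYX_meas: "(\<lambda>(x, y). pYX x y) \<in> borel_measurable borel"
    and pYX_nonneg: "\<forall>x y. 0 \<le> pYX x y"
    and pYX_density: "\<forall>x\<in>unit_cube. integrable lborel (pYX x) \<and> (\<integral>y. pYX x y \<partial>lborel) = 1"
    and A2: "c1 > 0" "\<forall>x\<in>unit_cube. \<forall>y\<in>{-(Mpsi*R)..Mpsi*R}. c1 \<le> pYX x y \<and> pYX x y \<le> c2"
    and data_dist: "\<forall>s i. 1 \<le> s \<longrightarrow> 1 \<le> i \<longrightarrow> i \<le> n s \<longrightarrow>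
          distributed M lborel (\<lambda>\<omega>. (XX s i \<omega>, YY s i \<omega>)) (\<lambda>(x, y). ennreal (pX x * pYX x y))"
    and data_indep: "prob_space.indep_vars M (\<lambda>_. borel) (\<lambda>(s, i) \<omega>. (XX s i \<omega>, YY s i \<omega>))
          {(s, i). 1 \<le> s \<and> 1 \<le> i \<and> i \<le> n s}"
    and quantile: "\<forall>x\<in>unit_cube. (LINT y:{..q x}|lborel. pYX x y) = tau"
    and proj: "is_L2_proj psi J q checkq"
    and theta_past: "\<exists>g0 g.
          g0 \<in> borel_measurable (PiM {(s, i). 1 \<le> s \<and> s < t \<and> 1 \<le> i \<and> i \<le> n s} (\<lambda>_. borel)) \<and>
          (\<forall>k j. (\<lambda>d. g d k j) \<in> borel_measurable
                    (PiM {(s, i). 1 \<le> s \<and> s < t \<and> 1 \<le> i \<and> i \<le> n s} (\<lambda>_. borel))) \<and>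
          (\<forall>\<omega>\<in>space M.
             ahat \<omega> = g0 (\<lambda>(s, i)\<in>{(s, i). 1 \<le> s \<and> s < t \<and> 1 \<le> i \<and> i \<le> n s}. (XX s i \<omega>, YY s i \<omega>)) \<and>
             th \<omega> = g (\<lambda>(s, i)\<in>{(s, i). 1 \<le> s \<and> s < t \<and> 1 \<le> i \<and> i \<le> n s}. (XX s i \<omega>, YY s i \<omega>)))"
    and theta_l1: "\<forall>\<omega>\<in>space M. \<bar>ahat \<omega>\<bar> + (\<Sum>k\<in>UNIV. \<Sum>j<J. \<bar>th \<omega> k j\<bar>) \<le> R"
    and gamma: "gamma > 0"
  shows "2 * gamma * (\<integral>\<omega>. L2_inner (\<lambda>v. trunc_fun psi J (ahat \<omega>) (th \<omega>) v - q v)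
             (\<lambda>v. (tau - (if YY t 1 \<omega> \<le> trunc_fun psi J (ahat \<omega>) (th \<omega>) (XX t 1 \<omega>) then 1 else 0))
                   * kernel_t psi J (XX t 1 \<omega>) v) \<partial>M)
         \<le> - gamma * c1 * C1 * (\<integral>\<omega>. L2_inner (\<lambda>v. trunc_fun psi J (ahat \<omega>) (th \<omega>) v - checkq v)
                                          (\<lambda>v. trunc_fun psi J (ahat \<omega>) (th \<omega>) v - checkq v) \<partial>M)
           + gamma * (c2\<^sup>2 * C2\<^sup>2 / (c1 * C1)) * L2_inner (\<lambda>v. q v - checkq v) (\<lambda>v. q v - checkq v)"
proof -
  interpret prob_space M by (rule M)
  from proj obtain ac cc where checkq_eq: "checkq = trunc_fun psi J ac cc"
    and proj_orth: "\<forall>g\<in>basis_span psi J. L2_inner (\<lambda>x. q x - checkq x) g = 0"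
    unfolding is_L2_proj_def basis_span_def by blast
  interpret model psi Mpsi q alpha_s R theta_s pX pYX tau C1 C2 c1 c2 J ac cc checkq
    by unfold_locales (use Mpsi psi_meas psi_bnd psi_centered psi_orthonormal q_expansion
        theta_s_summable theta_s_l1 pX_meas pX_nonneg pX_zero A1 pYX_meas pYX_nonneg
        pYX_density A2 quantile checkq_eq proj_orth in auto)
  define P where "P = {(s, i). 1 \<le> s \<and> s < t \<and> 1 \<le> i \<and> i \<le> n s}"
  define I where "I = {(s, i). 1 \<le> s \<and> 1 \<le> i \<and> i \<le> n s}"
  define S where "S = PiM P (\<lambda>_. borel :: ((real^'p) \<times> real) measure)"
  define D where "D = (\<lambda>\<omega>. (\<lambda>(s, i)\<in>P. (XX s i \<omega>, YY s i \<omega>)))"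
  define Z where "Z = (\<lambda>\<omega>. (XX t 1 \<omega>, YY t 1 \<omega>))"
  obtain g0 g where g0m: "g0 \<in> borel_measurable S"
      and gm: "\<forall>k j. (\<lambda>d. g d k j) \<in> borel_measurable S"
      and ahat_eq: "\<forall>\<omega>\<in>space M. ahat \<omega> = g0 (D \<omega>) \<and> th \<omega> = g (D \<omega>)"
    using theta_past unfolding S_def P_def D_def by blast
  have t1I: "(t, 1) \<in> I" using t n_pos unfolding I_def by auto
  have PI: "P \<subseteq> I" unfolding P_def I_def by auto
  have Pt: "P \<inter> {(t, 1)} = {}" unfolding P_def by auto
  have ind0: "indep_var (PiM P (\<lambda>_. borel)) (\<lambda>\<omega>. restrict (\<lambda>i. (\<lambda>(s, i) \<omega>. (XX s i \<omega>, YY s i \<omega>)) i \<omega>) P)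
      (PiM {(t, 1)} (\<lambda>_. borel)) (\<lambda>\<omega>. restrict (\<lambda>i. (\<lambda>(s, i) \<omega>. (XX s i \<omega>, YY s i \<omega>)) i \<omega>) {(t, 1)})"
    by (rule indep_var_restrict[OF data_indep[folded I_def] Pt PI]) (use t1I in auto)
  define T1 where "T1 = PiM {(t, 1::nat)} (\<lambda>_. borel :: ((real^'p) \<times> real) measure)"
  define D1 where "D1 = (\<lambda>\<omega>. (\<lambda>(s, i)\<in>{(t, 1::nat)}. (XX s i \<omega>, YY s i \<omega>)))"
  have e1: "(\<lambda>\<omega>. restrict (\<lambda>i. (\<lambda>(s, i) \<omega>. (XX s i \<omega>, YY s i \<omega>)) i \<omega>) P) = D"
    unfolding D_def by (auto simp: fun_eq_iff restrict_def split: prod.split)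
  have e2: "(\<lambda>\<omega>. restrict (\<lambda>i. (\<lambda>(s, i) \<omega>. (XX s i \<omega>, YY s i \<omega>)) i \<omega>) {(t, 1)}) = D1"
    unfolding D1_def by (auto simp: fun_eq_iff restrict_def split: prod.split)
  have indep: "indep_var S D T1 D1"
    using ind0 unfolding e1 e2 S_def T1_def .
  have D_m[measurable]: "D \<in> measurable M S" using indep_var_rv1[OF indep] .
  have D1_m[measurable]: "D1 \<in> measurable M T1" using indep_var_rv2[OF indep] .
  have ev_m[measurable]: "(\<lambda>w. w (t, 1)) \<in> measurable T1 borel"
    unfolding T1_def by (rule measurable_component_singleton) simp
  have Z_D1: "Z \<omega> = D1 \<omega> (t, 1)" for \<omega> unfolding Z_def D1_def by simp
  have Z_m[measurable]: "Z \<in> measurable M borel"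
    unfolding Z_D1[abs_def] by measurable
  have joint: "distr M S D \<Otimes>\<^sub>M distr M T1 D1 = distr M (S \<Otimes>\<^sub>M T1) (\<lambda>\<omega>. (D \<omega>, D1 \<omega>))"
    using indep unfolding indep_var_distribution_eq by blast
  have Zd0: "distributed M lborel Z (\<lambda>(x, y). ennreal (pX x * pYX x y))"
    using data_dist t n_pos unfolding Z_def by auto
  have dens_eq: "(\<lambda>(x, y). ennreal (pX x * pYX x y)) = (\<lambda>z::(real^'p)\<times>real. ennreal (pX (fst z) * pYX (fst z) (snd z)))"
    by (simp add: fun_eq_iff)
  have Zd: "distributed M lborel Z (\<lambda>z. ennreal (pX (fst z) * pYX (fst z) (snd z)))"
    using Zd0 unfolding dens_eq .
  have dens_nn: "0 \<le> pX (fst z) * pYX (fst z) (snd z)" for z :: "(real^'p)\<times>real"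
    using pX_nonneg pYX_nonneg by simp
  have dens_int: "integrable lborel (\<lambda>z::(real^'p)\<times>real. pX (fst z) * pYX (fst z) (snd z))"
  proof -
    have "integrable lborel (\<lambda>z. pX (fst z) * pYX (fst z) (snd z) * 1) \<longleftrightarrow> integrable M (\<lambda>\<omega>. 1::real)"
      by (rule distributed_integrable[OF Zd]) (auto simp: dens_nn)
    then show ?thesis by simp
  qed
  have AE_cube: "AE \<omega> in M. fst (Z \<omega>) \<in> unit_cube"
  proof -
    have dm: "(\<lambda>z::(real^'p)\<times>real. ennreal (pX (fst z) * pYX (fst z) (snd z))) \<in> borel_measurable lborel"
      using distributed_borel_measurable[OF Zd] .
    have "AE z in density lborel (\<lambda>z. ennreal (pX (fst z) * pYX (fst z) (snd z))). fst z \<in> unit_cube"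
      unfolding AE_density[OF dm]
    proof (rule AE_I2, rule impI)
      fix z :: "(real^'p)\<times>real"
      assume "0 < ennreal (pX (fst z) * pYX (fst z) (snd z))"
      then have "pX (fst z) \<noteq> 0" by auto
      then show "fst z \<in> unit_cube" using pX_zero by auto
    qed
    then have a1: "AE z in distr M lborel Z. fst z \<in> unit_cube"
      unfolding distributed_distr_eq_density[OF Zd] .
    have s1: "{z \<in> space lborel. fst z \<in> unit_cube} \<in> sets (lborel::((real^'p)\<times>real) measure)"
    proof -
      have "fst -` unit_cube \<inter> space lborel \<in> sets (lborel::((real^'p)\<times>real) measure)"
        by (rule measurable_sets[where A=borel]) (use cube_sets in auto)
      moreover have "fst -` unit_cube \<inter> space lborel = {z \<in> space lborel. fst z \<in> unit_cube}" by auto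
      ultimately show ?thesis by (metis (no_types))
    qed
    show ?thesis
      using AE_distr_iff[OF distributed_measurable[OF Zd] s1] a1 by simp
  qed
  note g0m[measurable]
  have gm'[measurable]: "(\<lambda>d. g d k j) \<in> borel_measurable S" for k j using gm by blast
  define fd where "fd = (\<lambda>d x. trunc_fun psi J (g0 d) (g d) x)"
  define \<phi> where "\<phi> = (\<lambda>d (z::(real^'p)\<times>real). (tau - (if snd z \<le> fd d (fst z) then 1 else 0)) * (fd d (fst z) - checkq (fst z)))"
  define \<Phi>p where "\<Phi>p = (\<lambda>p::((nat \<times> nat \<Rightarrow> (real^'p)\<times>real) \<times> (nat \<times> nat \<Rightarrow> (real^'p)\<times>real)). \<phi> (fst p) (snd p (t, 1)))"
  have fdm: "(\<lambda>p. fd (fst p) (fst (snd p (t,1)))) \<in> borel_measurable (S \<Otimes>\<^sub>M T1)"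
    unfolding fd_def trunc_fun_def by measurable
  have ym: "(\<lambda>p. snd (snd p (t,1))) \<in> borel_measurable (S \<Otimes>\<^sub>M T1)" by measurable
  have cqm: "(\<lambda>p. checkq (fst (snd p (t,1)))) \<in> borel_measurable (S \<Otimes>\<^sub>M T1)" by measurable
  have indm: "(\<lambda>p. if snd (snd p (t,1)) \<le> fd (fst p) (fst (snd p (t,1))) then 1 else (0::real)) \<in> borel_measurable (S \<Otimes>\<^sub>M T1)"
    by (rule meas_if_le[OF fdm ym])
  have \<Phi>p_m[measurable]: "\<Phi>p \<in> borel_measurable (S \<Otimes>\<^sub>M T1)"
    unfolding \<Phi>p_def \<phi>_def
    by (rule borel_measurable_times[OF borel_measurable_diff[OF measurable_const indm] borel_measurable_diff[OF fdm cqm]]) simp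
  have lhs_eq: "L2_inner (\<lambda>v. trunc_fun psi J (ahat \<omega>) (th \<omega>) v - q v)
             (\<lambda>v. (tau - (if YY t 1 \<omega> \<le> trunc_fun psi J (ahat \<omega>) (th \<omega>) (XX t 1 \<omega>) then 1 else 0))
                   * kernel_t psi J (XX t 1 \<omega>) v) = \<Phi>p (D \<omega>, D1 \<omega>)" if "\<omega> \<in> space M" for \<omega>
    using lhs_identity ahat_eq that
    by (simp add: \<Phi>p_def \<phi>_def fd_def D1_def)
  define Cb where "Cb = (\<bar>tau\<bar> + 1) * (Mpsi * R + Cq)"
  have coefD: "\<bar>g0 (D \<omega>)\<bar> + (\<Sum>k\<in>UNIV. \<Sum>j<J. \<bar>g (D \<omega>) k j\<bar>) \<le> R" if "\<omega> \<in> space M" for \<omega>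
    using theta_l1 ahat_eq that by auto
  have \<phi>_bnd: "\<bar>\<phi> d z\<bar> \<le> Cb" if "fst z \<in> unit_cube" "\<bar>g0 d\<bar> + (\<Sum>k\<in>UNIV. \<Sum>j<J. \<bar>g d k j\<bar>) \<le> R" for d z
  proof -
    have "\<bar>tau - (if snd z \<le> fd d (fst z) then 1 else 0)\<bar> \<le> \<bar>tau\<bar> + 1" by auto
    moreover have "\<bar>fd d (fst z) - checkq (fst z)\<bar> \<le> Mpsi * R + Cq"
      using trunc_bnd_R[OF that(1) that(2)] checkq_bnd[OF that(1)] unfolding fd_def by linarith
    ultimately show ?thesis unfolding \<phi>_def Cb_def abs_mult
      by (intro mult_mono) auto
  qed
  have intM: "integrable M (\<lambda>\<omega>. \<Phi>p (D \<omega>, D1 \<omega>))"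
  proof (rule integrable_const_bound[where B=Cb])
    show "AE \<omega> in M. norm (\<Phi>p (D \<omega>, D1 \<omega>)) \<le> Cb"
      using AE_cube AE_space
    proof eventually_elim
      case (elim \<omega>)
      then show ?case using \<phi>_bnd[OF _ coefD[OF elim(2)]] by (simp add: \<Phi>p_def Z_D1)
    qed
    show "(\<lambda>\<omega>. \<Phi>p (D \<omega>, D1 \<omega>)) \<in> borel_measurable M" by measurable
  qed
  interpret PD: prob_space "distr M S D" by (rule prob_space_distr[OF D_m])
  interpret PT: prob_space "distr M T1 D1" by (rule prob_space_distr[OF D1_m])
  have PP: "pair_sigma_finite (distr M S D) (distr M T1 D1)"
    by (simp add: pair_sigma_finite_def PD.sigma_finite_measure_axioms PT.sigma_finite_measure_axioms)
  have int_joint: "integrable (distr M S D \<Otimes>\<^sub>M distr M T1 D1) \<Phi>p"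
    unfolding joint by (subst integrable_distr_eq) (use intM in auto)
  define \<Phi> where "\<Phi> = (\<lambda>d. \<integral>w. \<Phi>p (d, w) \<partial>distr M T1 D1)"
  define Hd where "Hd = (\<lambda>d. (g0 d - ac)^2 + (\<Sum>k\<in>UNIV. \<Sum>j<J. (g d k j - cc k j)^2))"
  define KE where "KE = c2\<^sup>2 * C2\<^sup>2 / (c1 * C1) * L2_inner (\<lambda>v. q v - checkq v) (\<lambda>v. q v - checkq v)"
  have Hd_m[measurable]: "Hd \<in> borel_measurable S" unfolding Hd_def by measurable
  have E1: "(\<integral>\<omega>. L2_inner (\<lambda>v. trunc_fun psi J (ahat \<omega>) (th \<omega>) v - q v)
             (\<lambda>v. (tau - (if YY t 1 \<omega> \<le> trunc_fun psi J (ahat \<omega>) (th \<omega>) (XX t 1 \<omega>) then 1 else 0))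
                   * kernel_t psi J (XX t 1 \<omega>) v) \<partial>M) = (\<integral>\<omega>. \<Phi>p (D \<omega>, D1 \<omega>) \<partial>M)"
    by (rule Bochner_Integration.integral_cong[OF refl]) (rule lhs_eq)
  also have "\<dots> = (\<integral>p. \<Phi>p p \<partial>(distr M (S \<Otimes>\<^sub>M T1) (\<lambda>\<omega>. (D \<omega>, D1 \<omega>))))"
    by (rule integral_distr[symmetric]) measurable
  also have "\<dots> = (\<integral>d. \<Phi> d \<partial>distr M S D)"
    unfolding joint[symmetric] \<Phi>_def by (rule pair_sigma_finite.integral_fst'[OF PP int_joint, symmetric])
  finally have E1': "(\<integral>\<omega>. L2_inner (\<lambda>v. trunc_fun psi J (ahat \<omega>) (th \<omega>) v - q v)
             (\<lambda>v. (tau - (if YY t 1 \<omega> \<le> trunc_fun psi J (ahat \<omega>) (th \<omega>) (XX t 1 \<omega>) then 1 else 0))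
                   * kernel_t psi J (XX t 1 \<omega>) v) \<partial>M) = (\<integral>d. \<Phi> d \<partial>distr M S D)" .
  have int\<Phi>: "integrable (distr M S D) \<Phi>"
    unfolding \<Phi>_def by (rule pair_sigma_finite.integrable_fst'[OF PP int_joint])
  have inner: "2 * \<Phi> d \<le> -(c1*C1) * Hd d + KE"
    if dcoef: "\<bar>g0 d\<bar> + (\<Sum>k\<in>UNIV. \<Sum>j<J. \<bar>g d k j\<bar>) \<le> R" and dS: "d \<in> space S" for d
  proof -
    have \<phi>m: "\<phi> d \<in> borel_measurable borel"
    proof -
      have fm: "fd d \<in> borel_measurable borel" unfolding fd_def by (rule trunc_m)
      have im: "(\<lambda>z::(real^'p)\<times>real. if snd z \<le> fd d (fst z) then 1 else (0::real)) \<in> borel_measurable borel"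
        by (rule meas_if_le) (use fm in measurable)
      show ?thesis unfolding \<phi>_def
        by (rule borel_measurable_times[OF borel_measurable_diff[OF measurable_const im]]) (use fm in measurable)
    qed
    have "\<Phi> d = (\<integral>\<omega>. \<phi> d (Z \<omega>) \<partial>M)"
    proof -
      have cm: "(\<lambda>w. \<phi> d (w (t, 1))) \<in> borel_measurable T1"
        by (rule measurable_compose[OF ev_m \<phi>m])
      show ?thesis unfolding \<Phi>_def \<Phi>p_def Z_D1 fst_conv snd_conv
        by (rule integral_distr[OF D1_m cm])
    qed
    also have "\<dots> = (\<integral>z. pX (fst z) * pYX (fst z) (snd z) * \<phi> d z \<partial>lborel)"
      by (rule distributed_integral[OF Zd, symmetric]) (use \<phi>m dens_nn in auto)
    finally have "2 * \<Phi> d = 2 * (\<integral>z. pX (fst z) * pYX (fst z) (snd z) * \<phi> d z \<partial>lborel)" by simp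
    also have "\<dots> \<le> -(c1*C1) * L2_inner (\<lambda>v. trunc_fun psi J (g0 d) (g d) v - checkq v) (\<lambda>v. trunc_fun psi J (g0 d) (g d) v - checkq v) + KE"
      using inner_bound(2)[OF dcoef dens_int] unfolding KE_def \<phi>_def fd_def by simp
    also have "\<dots> = -(c1*C1) * Hd d + KE" unfolding Hd_def Hd_eq ..
    finally show ?thesis .
  qed
  have AEd: "AE d in distr M S D. 2 * \<Phi> d \<le> -(c1*C1) * Hd d + KE"
  proof -
    have sm: "{d \<in> space S. \<bar>g0 d\<bar> + (\<Sum>k\<in>UNIV. \<Sum>j<J. \<bar>g d k j\<bar>) \<le> R} \<in> sets S" by measurable
    have "AE d in distr M S D. \<bar>g0 d\<bar> + (\<Sum>k\<in>UNIV. \<Sum>j<J. \<bar>g d k j\<bar>) \<le> R"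
      unfolding AE_distr_iff[OF D_m sm] using coefD by (intro AE_I2) auto
    then show ?thesis using AE_space[of "distr M S D"]
    proof eventually_elim
      case (elim d)
      then have "d \<in> space S" by simp
      then show ?case using inner[OF elim(1)] by simp
    qed
  qed
  define HB where "HB = (R + \<bar>ac\<bar>)^2 + (\<Sum>k\<in>UNIV. \<Sum>j<J. (R + \<bar>cc k j\<bar>)^2)"
  have HB: "\<bar>Hd d\<bar> \<le> HB" if dcoef: "\<bar>g0 d\<bar> + (\<Sum>k\<in>UNIV. \<Sum>j<J. \<bar>g d k j\<bar>) \<le> R" for d
  proof -
    have sq: "(x - y)^2 \<le> (R + \<bar>y\<bar>)^2" if "\<bar>x\<bar> \<le> R" for x y :: real
    proof -
      have "\<bar>x - y\<bar> \<le> R + \<bar>y\<bar>" using that by linarith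
      then have "\<bar>x - y\<bar> \<le> \<bar>R + \<bar>y\<bar>\<bar>" by linarith
      then show ?thesis using abs_le_square_iff by blast
    qed
    have s0: "0 \<le> (\<Sum>k\<in>UNIV. \<Sum>j<J. \<bar>g d k j\<bar>)" by (intro sum_nonneg) auto
    have a: "\<bar>g0 d\<bar> \<le> R" using dcoef s0 by linarith
    have b: "\<bar>g d k j\<bar> \<le> R" if "j < J" for k j
    proof -
      have "\<bar>g d k j\<bar> \<le> (\<Sum>j<J. \<bar>g d k j\<bar>)"
        using that by (intro member_le_sum) auto
      also have "\<dots> \<le> (\<Sum>k\<in>UNIV. \<Sum>j<J. \<bar>g d k j\<bar>)"
        by (intro member_le_sum) (auto intro: sum_nonneg)
      finally show ?thesis using dcoef by linarith
    qed
    have "0 \<le> Hd d" unfolding Hd_def by (intro add_nonneg_nonneg sum_nonneg) auto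
    moreover have "Hd d \<le> HB"
      unfolding Hd_def HB_def using a b sq by (intro add_mono sum_mono) auto
    ultimately show ?thesis by simp
  qed
  have intHd: "integrable (distr M S D) Hd"
  proof -
    have "integrable M (\<lambda>\<omega>. Hd (D \<omega>))"
    proof (rule integrable_const_bound[where B=HB])
      show "AE \<omega> in M. norm (Hd (D \<omega>)) \<le> HB"
        using AE_space by eventually_elim (use HB coefD in auto)
    qed measurable
    then show ?thesis by (subst integrable_distr_eq) auto
  qed
  have "(\<integral>d. 2 * \<Phi> d \<partial>distr M S D) \<le> (\<integral>d. -(c1*C1) * Hd d + KE \<partial>distr M S D)"
    by (rule integral_mono_AE[OF _ _ AEd]) (use int\<Phi> intHd in auto)
  also have "\<dots> = -(c1*C1) * (\<integral>d. Hd d \<partial>distr M S D) + KE"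
  proof -
    have "measure (distr M S D) (space S) = 1" using PD.prob_space by simp
    then show ?thesis using intHd by (simp add: Bochner_Integration.integral_add)
  qed
  also have "(\<integral>d. Hd d \<partial>distr M S D) = (\<integral>\<omega>. Hd (D \<omega>) \<partial>M)"
    by (rule integral_distr) auto
  also have "\<dots> = (\<integral>\<omega>. L2_inner (\<lambda>v. trunc_fun psi J (ahat \<omega>) (th \<omega>) v - checkq v)
                                          (\<lambda>v. trunc_fun psi J (ahat \<omega>) (th \<omega>) v - checkq v) \<partial>M)"
    by (rule Bochner_Integration.integral_cong[OF refl]) (use ahat_eq in \<open>simp add: Hd_def Hd_eq\<close>)
  finally have main: "2 * (\<integral>d. \<Phi> d \<partial>distr M S D) \<le> -(c1*C1) * (\<integral>\<omega>. L2_inner (\<lambda>v. trunc_fun psi J (ahat \<omega>) (th \<omega>) v - checkq v)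
                                          (\<lambda>v. trunc_fun psi J (ahat \<omega>) (th \<omega>) v - checkq v) \<partial>M) + KE"
    by simp
  have "gamma * (2 * (\<integral>d. \<Phi> d \<partial>distr M S D)) \<le> gamma * (-(c1*C1) * (\<integral>\<omega>. L2_inner (\<lambda>v. trunc_fun psi J (ahat \<omega>) (th \<omega>) v - checkq v)
                                          (\<lambda>v. trunc_fun psi J (ahat \<omega>) (th \<omega>) v - checkq v) \<partial>M) + KE)"
    using main gamma by (intro mult_left_mono) auto
  then show ?thesis unfolding E1' KE_def by (simp add: algebra_simps)
qed

end
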